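(* Let $q=c_{34}x_1x_2+c_{24}x_1x_3+c_{23}x_1x_4+c_{14}x_2x_3+c_{13}x_2x_4+c_{12}x_3x_4\in\mathbb{R}[x_1,x_2,x_3,x_4]$ be Lorentzian. Then for every $r\in\mathbb{R}$, \[ (r+1)\,c_{14}c_{23}+r(r+1)\,c_{13}c_{24}\;\ge\; r\,c_{12}c_{34}. \]
   Context: A homogeneous quadratic polynomial is Lorentzian if its coefficients are nonnegative, its support is M-convex (for exponent vectors $\alpha,\beta$ in the support and $i$ with $\alpha_i>\beta_i$ there is $j$ with $\alpha_j<\beta_j$ and $\alpha-e_i+e_j$ in the support), and its Hessian matrix has at most one positive eigenvalue. *)

theory Defs
  imports "Jordan_Normal_Form.Char_Poly"
begin

(* Polynomials in the variables x_0,...,x_{n-1} (paper: x_1..x_n) are represented by their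
   coefficient function on exponent vectors alpha :: nat => nat (alpha i = exponent of x_i). *)

definition unit_exp :: "nat \<Rightarrow> (nat \<Rightarrow> nat)" where
  "unit_exp i = (\<lambda>k. if k = i then 1 else 0)"

definition supp_poly :: "((nat \<Rightarrow> nat) \<Rightarrow> real) \<Rightarrow> (nat \<Rightarrow> nat) set" where
  "supp_poly p = {\<alpha>. p \<alpha> \<noteq> 0}"

definition hom_quadratic :: "nat \<Rightarrow> ((nat \<Rightarrow> nat) \<Rightarrow> real) \<Rightarrow> bool" where
  "hom_quadratic n p \<longleftrightarrow>
     (\<forall>\<alpha>\<in>supp_poly p. (\<forall>i. i \<ge> n \<longrightarrow> \<alpha> i = 0) \<and> (\<Sum>i<n. \<alpha> i) = 2)"

definition M_convex :: "nat \<Rightarrow> (nat \<Rightarrow> nat) set \<Rightarrow> bool" where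
  "M_convex n S \<longleftrightarrow>
     (\<forall>\<alpha>\<in>S. \<forall>\<beta>\<in>S. \<forall>i<n. \<alpha> i > \<beta> i \<longrightarrow>
        (\<exists>j<n. \<alpha> j < \<beta> j \<and> (\<alpha>(i := \<alpha> i - 1))(j := \<alpha> j + 1) \<in> S))"

(* Hessian matrix of a homogeneous quadratic polynomial: entry (i,j) is d^2 p / dx_i dx_j *)
definition hessian_quad :: "nat \<Rightarrow> ((nat \<Rightarrow> nat) \<Rightarrow> real) \<Rightarrow> real mat" where
  "hessian_quad n p = mat n n (\<lambda>(i, j).
      if i = j then 2 * p (\<lambda>k. if k = i then 2 else 0)
      else p (\<lambda>k. unit_exp i k + unit_exp j k))"

definition num_pos_eigenvalues :: "real mat \<Rightarrow> nat" where
  "num_pos_eigenvalues A = (\<Sum>x \<in> {x. x > 0 \<and> eigenvalue A x}. order x (char_poly A))"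

definition lorentzian_quadratic :: "nat \<Rightarrow> ((nat \<Rightarrow> nat) \<Rightarrow> real) \<Rightarrow> bool" where
  "lorentzian_quadratic n p \<longleftrightarrow>
     hom_quadratic n p \<and> (\<forall>\<alpha>. p \<alpha> \<ge> 0) \<and> M_convex n (supp_poly p) \<and>
     num_pos_eigenvalues (hessian_quad n p) \<le> 1"

(* The quadratic
   q = c34 x1x2 + c24 x1x3 + c23 x1x4 + c14 x2x3 + c13 x2x4 + c12 x3x4,
   with the paper's variables x1..x4 represented as indices 0..3. *)
definition quad4 :: "real \<Rightarrow> real \<Rightarrow> real \<Rightarrow> real \<Rightarrow> real \<Rightarrow> real \<Rightarrow> (nat \<Rightarrow> nat) \<Rightarrow> real" where
  "quad4 c12 c13 c14 c23 c24 c34 = (\<lambda>\<alpha>.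
     if \<alpha> = (\<lambda>k. unit_exp 0 k + unit_exp 1 k) then c34
     else if \<alpha> = (\<lambda>k. unit_exp 0 k + unit_exp 2 k) then c24
     else if \<alpha> = (\<lambda>k. unit_exp 0 k + unit_exp 3 k) then c23
     else if \<alpha> = (\<lambda>k. unit_exp 1 k + unit_exp 2 k) then c14
     else if \<alpha> = (\<lambda>k. unit_exp 1 k + unit_exp 3 k) then c13
     else if \<alpha> = (\<lambda>k. unit_exp 2 k + unit_exp 3 k) then c12
     else 0)"

end

theory Submission
  imports Defs
begin


lemma det_exp0:
  assumes A: "(A :: 'a :: comm_ring_1 mat) \<in> carrier_mat (Suc n) (Suc n)"
  shows "det A = (\<Sum>j<Suc n. (-1)^j * A $$ (0,j) * det (mat_delete A 0 j))"
  using laplace_expansion_row[OF A, of 0] by (simp add: cofactor_def mult.assoc mult.left_commute)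

lemma det2:
  assumes A: "(A :: 'a :: comm_ring_1 mat) \<in> carrier_mat 2 2"
  shows "det A = A$$(0,0) * A$$(1,1) - A$$(0,1) * A$$(1,0)"
proof -
  have "det (mat_delete A 0 j) = A $$ (1, if 0 < j then 0 else 1)" for j
    by (subst det_single[of "mat_delete A 0 j"], use A in \<open>auto simp: mat_delete_def\<close>)
  then show ?thesis using det_exp0[of A 1] A by (simp add: numeral_2_eq_2 lessThan_Suc)
qed

lemma det3:
  assumes A: "(A :: 'a :: comm_ring_1 mat) \<in> carrier_mat 3 3"
  shows "det A = A$$(0,0) * (A$$(1,1) * A$$(2,2) - A$$(1,2) * A$$(2,1))
    - A$$(0,1) * (A$$(1,0) * A$$(2,2) - A$$(1,2) * A$$(2,0))
    + A$$(0,2) * (A$$(1,0) * A$$(2,1) - A$$(1,1) * A$$(2,0))"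
proof -
  have c: "mat_delete A 0 j \<in> carrier_mat 2 2" for j using A by (auto simp: mat_delete_def)
  have e: "det (mat_delete A 0 j) = A $$ (1, if 0 < j then 0 else 1) * A $$ (2, if 1 < j then 1 else 2)
     - A $$ (1, if 1 < j then 1 else 2) * A $$ (2, if 0 < j then 0 else 1)" for j
    using det2[OF c[of j]] A by (simp add: mat_delete_def numeral_2_eq_2)
  show ?thesis using det_exp0[of A 2] A unfolding e by (simp add: numeral_3_eq_3 numeral_2_eq_2 lessThan_Suc algebra_simps)
qed

definition m3 :: "(nat \<Rightarrow> nat \<Rightarrow> 'a::comm_ring_1) \<Rightarrow> nat \<Rightarrow> nat \<Rightarrow> nat \<Rightarrow> nat \<Rightarrow> nat \<Rightarrow> nat \<Rightarrow> 'a" where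
  "m3 f r0 r1 r2 c0 c1 c2 = f r0 c0 * (f r1 c1 * f r2 c2 - f r1 c2 * f r2 c1)
    - f r0 c1 * (f r1 c0 * f r2 c2 - f r1 c2 * f r2 c0)
    + f r0 c2 * (f r1 c0 * f r2 c1 - f r1 c1 * f r2 c0)"

lemma det4:
  assumes A: "(A :: 'a :: comm_ring_1 mat) \<in> carrier_mat 4 4"
  shows "det A = A$$(0,0) * m3 (\<lambda>i j. A$$(i,j)) 1 2 3 1 2 3 - A$$(0,1) * m3 (\<lambda>i j. A$$(i,j)) 1 2 3 0 2 3
    + A$$(0,2) * m3 (\<lambda>i j. A$$(i,j)) 1 2 3 0 1 3 - A$$(0,3) * m3 (\<lambda>i j. A$$(i,j)) 1 2 3 0 1 2"
proof -
  have c: "mat_delete A 0 j \<in> carrier_mat 3 3" for j using A by (auto simp: mat_delete_def)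
  have e: "det (mat_delete A 0 j) = m3 (\<lambda>i j. A$$(i,j)) 1 2 3 (if 0 < j then 0 else 1) (if 1 < j then 1 else 2) (if 2 < j then 2 else 3)" for j
    using det3[OF c[of j]] A by (simp add: mat_delete_def m3_def numeral_2_eq_2 numeral_3_eq_3)
  have "det A = (\<Sum>j<Suc 3. (-1)^j * A $$ (0,j) * det (mat_delete A 0 j))"
    using det_exp0[of A 3] A by simp
  also have "\<dots> = A$$(0,0) * m3 (\<lambda>i j. A$$(i,j)) 1 2 3 1 2 3 - A$$(0,1) * m3 (\<lambda>i j. A$$(i,j)) 1 2 3 0 2 3
    + A$$(0,2) * m3 (\<lambda>i j. A$$(i,j)) 1 2 3 0 1 3 - A$$(0,3) * m3 (\<lambda>i j. A$$(i,j)) 1 2 3 0 1 2"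
    unfolding e by (simp add: lessThan_Suc eval_nat_numeral)
  finally show ?thesis .
qed



lemma ue: "(\<lambda>k. unit_exp i k + unit_exp j k) = (\<lambda>k. (if k = i then 1 else 0) + (if k = j then 1 else 0))"
  by (simp add: unit_exp_def)

lemma fne: "f \<noteq> g" if "f x \<noteq> g x" for f g :: "nat \<Rightarrow> nat" using that by auto

lemma q01: "quad4 c12 c13 c14 c23 c24 c34 (\<lambda>k. unit_exp 0 k + unit_exp 1 k) = c34"
  unfolding quad4_def by simp
lemma q02: "quad4 c12 c13 c14 c23 c24 c34 (\<lambda>k. unit_exp 0 k + unit_exp 2 k) = c24"
  unfolding quad4_def ue by (simp add: fne[where x=1] fne[where x=2] fne[where x=3])
lemma q23: "quad4 c12 c13 c14 c23 c24 c34 (\<lambda>k. unit_exp 3 k + unit_exp 2 k) = c12"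
  unfolding quad4_def ue by (simp add: fne[where x=0] fne[where x=1] fne[where x=2] fne[where x=3] add.commute)
lemma qd: "quad4 c12 c13 c14 c23 c24 c34 (\<lambda>k. if k = i then 2 else 0) = 0"
  unfolding quad4_def ue by (simp add: fne[where x=i])


lemma real_eig:
  fixes h :: "nat \<Rightarrow> nat \<Rightarrow> real" and z :: complex
  assumes sym: "\<And>i j. h i j = h j i"
    and ev: "eigenvalue (mat n n (\<lambda>(i,j). complex_of_real (h i j))) z"
  shows "Im z = 0"
proof -
  let ?H = "mat n n (\<lambda>(i,j). complex_of_real (h i j))"
  obtain v where v: "v \<in> carrier_vec n" "v \<noteq> 0\<^sub>v n" "?H *\<^sub>v v = z \<cdot>\<^sub>v v"
    using ev unfolding eigenvalue_def eigenvector_def by auto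
  have E: "(\<Sum>j<n. of_real (h i j) * v$j) = z * v$i" if "i < n" for i
  proof -
    have "(?H *\<^sub>v v) $ i = (z \<cdot>\<^sub>v v) $ i" using v(3) by simp
    then show ?thesis using that v(1) by (simp add: scalar_prod_def row_def atLeast0LessThan)
  qed
  define N where "N = (\<Sum>i<n. cnj (v$i) * v$i)"
  have L1: "(\<Sum>i<n. cnj (v$i) * (\<Sum>j<n. of_real (h i j) * v$j)) = z * N"
  proof -
    have "(\<Sum>i<n. cnj (v$i) * (\<Sum>j<n. of_real (h i j) * v$j)) = (\<Sum>i<n. z * (cnj (v$i) * v$i))"
      by (rule sum.cong) (simp_all add: E)
    then show ?thesis unfolding N_def by (simp only: sum_distrib_left)
  qed
  have E': "(\<Sum>j<n. of_real (h i j) * cnj (v$j)) = cnj z * cnj (v$i)" if "i < n" for i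
  proof -
    have "cnj (\<Sum>j<n. of_real (h i j) * v$j) = cnj (z * v$i)" using E[OF that] by simp
    then show ?thesis by simp
  qed
  have L2: "(\<Sum>i<n. v$i * (\<Sum>j<n. of_real (h i j) * cnj (v$j))) = cnj z * N"
  proof -
    have "(\<Sum>i<n. v$i * (\<Sum>j<n. of_real (h i j) * cnj (v$j))) = (\<Sum>i<n. cnj z * (cnj (v$i) * v$i))"
      by (rule sum.cong) (simp_all add: E')
    then show ?thesis unfolding N_def by (simp only: sum_distrib_left)
  qed
  have "(\<Sum>i<n. cnj (v$i) * (\<Sum>j<n. of_real (h i j) * v$j))
      = (\<Sum>i<n. \<Sum>j<n. cnj (v$i) * of_real (h i j) * v$j)"
    by (simp add: sum_distrib_left mult.assoc)
  also have "\<dots> = (\<Sum>j<n. \<Sum>i<n. cnj (v$i) * of_real (h i j) * v$j)" by (rule sum.swap)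
  also have "\<dots> = (\<Sum>j<n. v$j * (\<Sum>i<n. of_real (h j i) * cnj (v$i)))"
    by (simp add: sum_distrib_left sym mult.commute mult.left_commute)
  finally have "z * N = cnj z * N" using L1 L2 by simp
  moreover have "N \<noteq> 0"
  proof
    assume N0: "N = 0"
    have "N = of_real (\<Sum>i<n. (cmod (v$i))^2)" unfolding N_def of_real_sum complex_norm_square
      by (simp add: mult.commute)
    hence s0: "(\<Sum>i<n. (cmod (v$i))^2) = 0" using N0 of_real_eq_0_iff by (simp del: of_real_sum)
    have "\<forall>i\<in>{..<n}. (cmod (v$i))^2 = 0"
      using sum_nonneg_eq_0_iff[of "{..<n}" "\<lambda>i. (cmod (v$i))^2"] s0 by simp
    hence "v = 0\<^sub>v n" using v(1) by (auto simp: vec_eq_iff)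
    with v(2) show False by simp
  qed
  ultimately have "z = cnj z" by simp
  then have "Im z = Im (cnj z)" by (rule arg_cong)
  then show ?thesis by simp
qed


definition hq :: "real \<Rightarrow> real \<Rightarrow> real \<Rightarrow> real \<Rightarrow> real \<Rightarrow> real \<Rightarrow> nat \<Rightarrow> nat \<Rightarrow> real" where
  "hq c12 c13 c14 c23 c24 c34 i j = (if i = j then 0 else quad4 c12 c13 c14 c23 c24 c34 (\<lambda>k. unit_exp i k + unit_exp j k))"

lemma hq_sym: "hq c12 c13 c14 c23 c24 c34 i j = hq c12 c13 c14 c23 c24 c34 j i"
  unfolding hq_def by (simp add: add.commute)

lemma hess_eq: "hessian_quad 4 (quad4 c12 c13 c14 c23 c24 c34) = mat 4 4 (\<lambda>(i,j). hq c12 c13 c14 c23 c24 c34 i j)"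
  unfolding hessian_quad_def hq_def by (rule cong_mat, auto simp: qd)

lemma hq_vals:
  "hq c12 c13 c14 c23 c24 c34 0 0 = 0"
  "hq c12 c13 c14 c23 c24 c34 1 1 = 0"
  "hq c12 c13 c14 c23 c24 c34 2 2 = 0"
  "hq c12 c13 c14 c23 c24 c34 3 3 = 0"
  "hq c12 c13 c14 c23 c24 c34 0 1 = c34"
  "hq c12 c13 c14 c23 c24 c34 0 2 = c24"
  "hq c12 c13 c14 c23 c24 c34 0 3 = c23"
  "hq c12 c13 c14 c23 c24 c34 1 2 = c14"
  "hq c12 c13 c14 c23 c24 c34 1 3 = c13"
  "hq c12 c13 c14 c23 c24 c34 2 3 = c12"
  "hq c12 c13 c14 c23 c24 c34 1 0 = c34"
  "hq c12 c13 c14 c23 c24 c34 2 0 = c24"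
  "hq c12 c13 c14 c23 c24 c34 3 0 = c23"
  "hq c12 c13 c14 c23 c24 c34 2 1 = c14"
  "hq c12 c13 c14 c23 c24 c34 3 1 = c13"
  "hq c12 c13 c14 c23 c24 c34 3 2 = c12"
  unfolding hq_def quad4_def ue
  by (simp_all add: fne[where x=0] fne[where x=1] fne[where x=2] fne[where x=3] add.commute)

definition "Sv c12 c13 c14 c23 c24 c34 = c12^2+c13^2+c14^2+c23^2+c24^2+c34^2"
definition "Tv c12 c13 c14 c23 c24 c34 = 2*(c34*c24*c14 + c34*c23*c13 + c24*c23*c12 + c14*c13*c12)"
definition "Dv c12 c13 c14 c23 c24 c34 = (c12*c34)^2+(c13*c24)^2+(c14*c23)^2
   - 2*(c12*c34)*(c13*c24) - 2*(c13*c24)*(c14*c23) - 2*(c14*c23)*(c12*c34)"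

lemma cp_real:
  "poly (char_poly (mat 4 4 (\<lambda>(i,j). hq c12 c13 c14 c23 c24 c34 i j))) x
   = x^4 - Sv c12 c13 c14 c23 c24 c34 * x^2 - Tv c12 c13 c14 c23 c24 c34 * x + Dv c12 c13 c14 c23 c24 c34"
proof -
  let ?H = "mat 4 4 (\<lambda>(i,j). hq c12 c13 c14 c23 c24 c34 i j)"
  have c: "?H \<in> carrier_mat 4 4" by simp
  have "poly (char_poly ?H) x = det (- char_matrix ?H x)" by (rule char_poly_matrix[OF c])
  also have "\<dots> = x^4 - Sv c12 c13 c14 c23 c24 c34 * x^2 - Tv c12 c13 c14 c23 c24 c34 * x + Dv c12 c13 c14 c23 c24 c34"
    by (subst det4, simp add: char_matrix_def,
        simp add: char_matrix_def m3_def hq_vals hq_vals[unfolded One_nat_def] Sv_def Tv_def Dv_def power2_eq_square power4_eq_xxxx algebra_simps)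
  finally show ?thesis .
qed

lemma cp_cplx:
  "poly (char_poly (mat 4 4 (\<lambda>(i,j). complex_of_real (hq c12 c13 c14 c23 c24 c34 i j)))) z
   = z^4 - of_real (Sv c12 c13 c14 c23 c24 c34) * z^2 - of_real (Tv c12 c13 c14 c23 c24 c34) * z + of_real (Dv c12 c13 c14 c23 c24 c34)"
proof -
  let ?H = "mat 4 4 (\<lambda>(i,j). complex_of_real (hq c12 c13 c14 c23 c24 c34 i j))"
  have c: "?H \<in> carrier_mat 4 4" by simp
  have "poly (char_poly ?H) z = det (- char_matrix ?H z)" by (rule char_poly_matrix[OF c])
  also have "\<dots> = z^4 - of_real (Sv c12 c13 c14 c23 c24 c34) * z^2 - of_real (Tv c12 c13 c14 c23 c24 c34) * z + of_real (Dv c12 c13 c14 c23 c24 c34)"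
    by (subst det4, simp add: char_matrix_def,
        simp add: char_matrix_def m3_def hq_vals hq_vals[unfolded One_nat_def] Sv_def Tv_def Dv_def power2_eq_square power4_eq_xxxx algebra_simps)
  finally show ?thesis .
qed



lemma count2:
  assumes A: "(A :: real mat) \<in> carrier_mat n n"
    and P: "char_poly A = [:-x,1:] * [:-y,1:] * R" and R: "R \<noteq> 0" and x: "x > 0" and y: "y > 0"
  shows "num_pos_eigenvalues A \<ge> 2"
proof -
  let ?P = "char_poly A"
  have P0: "?P \<noteq> 0" unfolding P using R by (metis mult_eq_0_iff pCons_eq_0_iff one_neq_zero)
  let ?E = "{x. x > 0 \<and> eigenvalue A x}"
  have E: "?E = {x. x > 0 \<and> poly ?P x = 0}" using eigenvalue_root_char_poly[OF A] by auto
  have fin: "finite ?E" unfolding E using poly_roots_finite[OF P0] by (rule rev_finite_subset) auto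
  have xE: "x \<in> ?E" "y \<in> ?E" unfolding E using x y by (auto simp: P algebra_simps)
  have ox: "order x ?P > 0" "order y ?P > 0" using xE unfolding E using order_gt_0_iff[OF P0] by auto
  show ?thesis
  proof (cases "x = y")
    case True
    have "[:-x,1:]^2 dvd ?P" unfolding P True power2_eq_square by (rule dvd_triv_left)
    hence "order x ?P \<ge> 2" using P0 order_divides by blast
    moreover have "order x ?P \<le> num_pos_eigenvalues A" unfolding num_pos_eigenvalues_def
      by (rule member_le_sum[OF xE(1) _ fin]) auto
    ultimately show ?thesis by simp
  next
    case False
    have "sum (\<lambda>z. order z ?P) {x,y} \<le> num_pos_eigenvalues A" unfolding num_pos_eigenvalues_def
      by (rule sum_mono2[OF fin]) (use xE in auto)
    moreover have "sum (\<lambda>z. order z ?P) {x,y} = order x ?P + order y ?P" using False by simp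
    ultimately show ?thesis using ox by linarith
  qed
qed

lemma two_pos:
  fixes r1 r2 r3 r4 :: real
  assumes "r1 + r2 + r3 + r4 = 0" "r1 * r2 * r3 * r4 > 0"
  shows "(r1 > 0 \<and> r2 > 0) \<or> (r1 > 0 \<and> r3 > 0) \<or> (r1 > 0 \<and> r4 > 0) \<or>
         (r2 > 0 \<and> r3 > 0) \<or> (r2 > 0 \<and> r4 > 0) \<or> (r3 > 0 \<and> r4 > 0)"
proof (rule ccontr)
  assume n: "\<not> ?thesis"
  have nz: "r1 \<noteq> 0" "r2 \<noteq> 0" "r3 \<noteq> 0" "r4 \<noteq> 0" using assms(2) by auto
  show False
  proof (cases "r1 > 0")
    case True
    hence "r2 < 0" "r3 < 0" "r4 < 0" using n nz by auto
    hence "r1 * r2 * r3 * r4 < 0" using True by (simp add: mult_pos_neg mult_neg_neg mult_pos_pos mult_neg_pos)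
    then show False using assms(2) by simp
  next
    case f1: False
    show False
    proof (cases "r2 > 0")
      case True
      hence "r1 < 0" "r3 < 0" "r4 < 0" using n nz f1 by auto
      hence "r1 * r2 * r3 * r4 < 0" using True by (simp add: mult_pos_neg mult_neg_neg mult_pos_pos mult_neg_pos)
      then show False using assms(2) by simp
    next
      case f2: False
      show False
      proof (cases "r3 > 0")
        case True
        hence "r1 < 0" "r2 < 0" "r4 < 0" using n nz f1 f2 by auto
        hence "r1 * r2 * r3 * r4 < 0" using True by (simp add: mult_pos_neg mult_neg_neg mult_pos_pos mult_neg_pos)
        then show False using assms(2) by simp
      next
        case f3: False
        hence "r1 < 0" "r2 < 0" "r3 < 0" using nz f1 f2 by auto
        show False
        proof (cases "r4 > 0")
          case True
          hence "r1 * r2 * r3 * r4 < 0" using \<open>r1 < 0\<close> \<open>r2 < 0\<close> \<open>r3 < 0\<close>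
            by (simp add: mult_pos_neg mult_neg_neg mult_pos_pos mult_neg_pos)
          then show False using assms(2) by simp
        next
          case False
          then show False using assms(1) \<open>r1 < 0\<close> \<open>r2 < 0\<close> \<open>r3 < 0\<close> by linarith
        qed
      qed
    qed
  qed
qed



lemma final_ineq:
  fixes a b c r :: real
  assumes b: "b \<ge> 0" and c: "c \<ge> 0" and D: "a^2+b^2+c^2-2*a*b-2*b*c-2*c*a \<le> 0"
  shows "b * r^2 + (b + c - a) * r + c \<ge> 0"
proof (cases "b = 0")
  case True
  then have "(a - c)^2 \<le> 0" using D by (simp add: power2_eq_square algebra_simps)
  then have "(a - c)^2 = 0" by (smt (verit) zero_le_power2)
  then have "a = c" by simp
  then show ?thesis using True c by simp
next
  case False
  then have bp: "b > 0" using b by simp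
  have "4 * b * (b * r^2 + (b + c - a) * r + c) = (2*b*r + b + c - a)^2 - (a^2+b^2+c^2-2*a*b-2*b*c-2*c*a)"
    by (simp add: power2_eq_square algebra_simps)
  also have "\<dots> \<ge> 0" using D by (smt (verit) zero_le_power2)
  finally have "0 \<le> 4 * b * (b * r^2 + (b + c - a) * r + c)" .
  then show ?thesis using bp by (simp add: zero_le_mult_iff)
qed

theorem lemma5p2:
  fixes c12 c13 c14 c23 c24 c34 r :: real
  assumes "lorentzian_quadratic 4 (quad4 c12 c13 c14 c23 c24 c34)"
  shows "(r + 1) * c14 * c23 + r * (r + 1) * c13 * c24 \<ge> r * c12 * c34"
proof -
  let ?p = "quad4 c12 c13 c14 c23 c24 c34"
  let ?h = "hq c12 c13 c14 c23 c24 c34"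
  define H where "H = mat 4 4 (\<lambda>(i,j). ?h i j)"
  define HC where "HC = mat 4 4 (\<lambda>(i,j). complex_of_real (?h i j))"
  define Dd where "Dd = Dv c12 c13 c14 c23 c24 c34"
  have nn: "\<And>\<alpha>. ?p \<alpha> \<ge> 0" and np: "num_pos_eigenvalues H \<le> 1"
    using assms unfolding lorentzian_quadratic_def H_def hess_eq by auto
  have hnn: "?h i j \<ge> 0" for i j unfolding hq_def using nn by simp
  have cnn: "c12 \<ge> 0" "c13 \<ge> 0" "c14 \<ge> 0" "c23 \<ge> 0" "c24 \<ge> 0" "c34 \<ge> 0"
    using hnn[of 2 3] hnn[of 1 3] hnn[of 1 2] hnn[of 0 3] hnn[of 0 2] hnn[of 0 1] by (simp_all add: hq_vals hq_vals[unfolded One_nat_def])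
  have Hc: "H \<in> carrier_mat 4 4" and HCc: "HC \<in> carrier_mat 4 4" unfolding H_def HC_def by auto
  have D: "Dd \<le> 0"
  proof (rule ccontr)
    assume "\<not> Dd \<le> 0"
    hence Dpos: "Dd > 0" by simp
    obtain as where cpf: "char_poly HC = (\<Prod>a\<leftarrow>as. [:- a, 1:])" and len: "length as = 4"
      using char_poly_factorized[OF HCc] by blast
    obtain a1 a2 a3 a4 where as: "as = [a1,a2,a3,a4]"
      using len by (auto simp: length_Suc_conv numeral_eq_Suc)
    have cpz: "poly (char_poly HC) z = (z - a1) * (z - a2) * (z - a3) * (z - a4)" for z
      by (simp add: cpf as algebra_simps)
    have re: "Im z = 0" if "poly (char_poly HC) z = 0" for z
      using real_eig[of ?h 4 z] hq_sym eigenvalue_root_char_poly[OF HCc] that unfolding HC_def by blast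
    have ar: "a = complex_of_real (Re a)" if "poly (char_poly HC) a = 0" for a
      using re[OF that] by (simp add: complex_eq_iff)
    define r1 where "r1 = Re a1"
    define r2 where "r2 = Re a2"
    define r3 where "r3 = Re a3"
    define r4 where "r4 = Re a4"
    have a_eq: "a1 = of_real r1" "a2 = of_real r2" "a3 = of_real r3" "a4 = of_real r4"
      unfolding r1_def r2_def r3_def r4_def by (rule ar, simp add: cpz)+
    have px: "poly (char_poly H) x = (x - r1) * (x - r2) * (x - r3) * (x - r4)" for x
    proof -
      have "complex_of_real (poly (char_poly H) x) = poly (char_poly HC) (of_real x)"
        unfolding H_def HC_def cp_real cp_cplx by simp
      also have "\<dots> = complex_of_real ((x - r1) * (x - r2) * (x - r3) * (x - r4))"
        unfolding cpz a_eq by simp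
      finally show ?thesis by (simp only: of_real_eq_iff)
    qed
    have cpH: "char_poly H = [:-r1,1:] * [:-r2,1:] * [:-r3,1:] * [:-r4,1:]"
      by (rule iffD1[OF poly_eq_poly_eq_iff], rule ext, simp add: px algebra_simps)
    have cpH2: "char_poly H = [:Dd, - Tv c12 c13 c14 c23 c24 c34, - Sv c12 c13 c14 c23 c24 c34, 0, 1:]"
      by (rule iffD1[OF poly_eq_poly_eq_iff], rule ext, simp add: H_def cp_real Dd_def algebra_simps power2_eq_square power4_eq_xxxx)
    have "coeff (char_poly H) 3 = 0" unfolding cpH2 by (simp add: numeral_3_eq_3)
    hence sum0: "r1 + r2 + r3 + r4 = 0" unfolding cpH by (simp add: numeral_3_eq_3 algebra_simps)
    have "poly (char_poly H) 0 = Dd" unfolding cpH2 by simp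
    hence prodD: "r1 * r2 * r3 * r4 > 0" using px[of 0] Dpos by simp
    have ne: "[:-r,1::real:] \<noteq> 0" for r by simp
    have ne2: "[:-r,1::real:] * [:-s,1:] \<noteq> 0" for r s by (simp add: ne)
    from two_pos[OF sum0 prodD] have "num_pos_eigenvalues H \<ge> 2"
    proof (elim disjE conjE)
      assume h: "r1 > 0" "r2 > 0"
      have "char_poly H = [:-r1,1:] * [:-r2,1:] * ([:-r3,1:] * [:-r4,1:])" by (simp only: cpH mult.assoc mult.commute mult.left_commute)
      from count2[OF Hc this ne2 h] show ?thesis .
    next
      assume h: "r1 > 0" "r3 > 0"
      have "char_poly H = [:-r1,1:] * [:-r3,1:] * ([:-r2,1:] * [:-r4,1:])" by (simp only: cpH mult.assoc mult.commute mult.left_commute)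
      from count2[OF Hc this ne2 h] show ?thesis .
    next
      assume h: "r1 > 0" "r4 > 0"
      have "char_poly H = [:-r1,1:] * [:-r4,1:] * ([:-r2,1:] * [:-r3,1:])" by (simp only: cpH mult.assoc mult.commute mult.left_commute)
      from count2[OF Hc this ne2 h] show ?thesis .
    next
      assume h: "r2 > 0" "r3 > 0"
      have "char_poly H = [:-r2,1:] * [:-r3,1:] * ([:-r1,1:] * [:-r4,1:])" by (simp only: cpH mult.assoc mult.commute mult.left_commute)
      from count2[OF Hc this ne2 h] show ?thesis .
    next
      assume h: "r2 > 0" "r4 > 0"
      have "char_poly H = [:-r2,1:] * [:-r4,1:] * ([:-r1,1:] * [:-r3,1:])" by (simp only: cpH mult.assoc mult.commute mult.left_commute)
      from count2[OF Hc this ne2 h] show ?thesis .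
    next
      assume h: "r3 > 0" "r4 > 0"
      have "char_poly H = [:-r3,1:] * [:-r4,1:] * ([:-r1,1:] * [:-r2,1:])" by (simp only: cpH mult.assoc mult.commute mult.left_commute)
      from count2[OF Hc this ne2 h] show ?thesis .
    qed
    with np show False by simp
  qed
  have "(c13*c24) * r^2 + ((c13*c24) + (c14*c23) - (c12*c34)) * r + (c14*c23) \<ge> 0"
    by (rule final_ineq) (use D cnn in \<open>simp_all add: Dd_def Dv_def power2_eq_square algebra_simps\<close>)
  then show ?thesis by (simp add: power2_eq_square algebra_simps)
qed


end
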